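(* Let $N,l$ be positive integers with $l<N$, and let $\hat a(\xi)=\cos^{2N}(\xi/2)\sum_{j=0}^{l}\binom{N-1+j}{j}\sin^{2j}(\xi/2)$ be the mask of the pseudo spline of type II of order $(N,l)$. Then for all $\xi\in\mathbb R$, $$|\hat a(\xi)|\ge 1-C_1|\xi|^{2l+2},\qquad C_1=\frac{\sum_{j=l+1}^{N+l}\binom{N+l}{j}}{2^{2l+2}}.$$ *)

theory Defs
  imports Complex_Main
begin

definition pseudo_spline_II_mask :: "nat \<Rightarrow> nat \<Rightarrow> real \<Rightarrow> real" where
  "pseudo_spline_II_mask N l \<xi> =
     (cos (\<xi>/2)) ^ (2*N) * (\<Sum>j=0..l. real ((N - 1 + j) choose j) * (sin (\<xi>/2)) ^ (2*j))"

end

theory Submission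
  imports Defs
begin

lemma key:
  fixes x y :: real
  assumes xy: "x + y = 1" and N: "N > 0"
  shows "(\<Sum>j\<le>l. real (N+l choose j) * x^j * y^(N+l-j)) = y^N * (\<Sum>j\<le>l. real ((N-1+j) choose j) * x^j)"
proof (induction l)
  case 0
  then show ?case by simp
next
  case (Suc l)
  define S where "S = (\<Sum>j\<le>l. real (N+l choose j) * x^j * y^(N+l-j))"
  have A: "(\<Sum>j\<le>Suc l. real (N + Suc l choose j) * x^j * y^(N + Suc l - j))
     = y^(N+l+1) + (\<Sum>i\<le>l. real (N + Suc l choose Suc i) * x^(Suc i) * y^(N + l - i))"
    by (subst sum.atMost_Suc_shift) simp
  have B: "(\<Sum>i\<le>l. real (N + Suc l choose Suc i) * x^(Suc i) * y^(N + l - i))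
     = (\<Sum>i\<le>l. real (N + l choose i) * x^(Suc i) * y^(N + l - i))
      + (\<Sum>i\<le>l. real (N + l choose Suc i) * x^(Suc i) * y^(N + l - i))"
    by (simp add: sum.distrib[symmetric] distrib_right)
  have C: "(\<Sum>i\<le>l. real (N + l choose i) * x^(Suc i) * y^(N + l - i)) = x * S"
    unfolding S_def by (simp add: sum_distrib_left algebra_simps)
  have D: "y^(N+l+1) + (\<Sum>i\<le>l. real (N + l choose Suc i) * x^(Suc i) * y^(N + l - i))
      = (\<Sum>j\<le>Suc l. real (N + l choose j) * x^j * y^(N + Suc l - j))"
    by (subst sum.atMost_Suc_shift) simp
  have E: "(\<Sum>j\<le>Suc l. real (N + l choose j) * x^j * y^(N + Suc l - j))
      = y * S + real (N + l choose Suc l) * x^(Suc l) * y^N"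
  proof -
    have "(\<Sum>j\<le>l. real (N + l choose j) * x^j * y^(N + Suc l - j)) = y * S"
      unfolding S_def sum_distrib_left
    proof (rule sum.cong)
      fix j assume "j \<in> {..l}"
      then have "N + Suc l - j = Suc (N + l - j)" by auto
      then show "real (N + l choose j) * x^j * y^(N + Suc l - j) = y * (real (N + l choose j) * x^j * y^(N + l - j))"
        by simp
    qed simp
    then show ?thesis by simp
  qed
  have F: "N - 1 + Suc l = N + l" using N by simp
  have "(\<Sum>j\<le>Suc l. real (N + Suc l choose j) * x^j * y^(N + Suc l - j))
      = (x + y) * S + real (N + l choose Suc l) * x^(Suc l) * y^N"
    using A B C D E by (simp add: algebra_simps)
  also have "\<dots> = S + real (N + l choose Suc l) * x^(Suc l) * y^N" using xy by simp
  also have "\<dots> = y ^ N * (\<Sum>j\<le>Suc l. real (N - 1 + j choose j) * x ^ j)"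
  proof -
    have "y ^ N * (\<Sum>j\<le>Suc l. real (N - 1 + j choose j) * x ^ j)
       = y ^ N * (\<Sum>j\<le>l. real (N - 1 + j choose j) * x ^ j) + y^N * (real (N - 1 + Suc l choose Suc l) * x ^ Suc l)"
      by (simp only: sum.atMost_Suc distrib_left)
    also have "\<dots> = S + real (N + l choose Suc l) * x^(Suc l) * y^N"
    proof -
      have SE: "S = y ^ N * (\<Sum>j\<le>l. real (N - 1 + j choose j) * x ^ j)" using Suc.IH S_def by simp
      show ?thesis unfolding F SE by (simp only: mult_ac)
    qed
    finally show ?thesis by (rule sym)
  qed
  finally show ?case .
qed

theorem mainTheorem3:
  fixes N l :: nat and \<xi> :: real
  assumes "0 < N" "0 < l" "l < N"
  shows "\<bar>pseudo_spline_II_mask N l \<xi>\<bar> \<ge>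
           1 - ((\<Sum>j=l+1..N+l. real ((N+l) choose j)) / 2 ^ (2*l+2)) * \<bar>\<xi>\<bar> ^ (2*l+2)"
proof -
  define x where "x = (sin (\<xi>/2))^2"
  define y where "y = (cos (\<xi>/2))^2"
  have xy: "x + y = 1" unfolding x_def y_def by simp
  have x0: "0 \<le> x" and y0: "0 \<le> y"
    unfolding x_def y_def by auto
  have x1: "x \<le> 1" and y1: "y \<le> 1" using xy x0 y0 by linarith+
  define T where "T = (\<lambda>j. real (N+l choose j) * x^j * y^(N+l-j))"
  have m: "pseudo_spline_II_mask N l \<xi> = (\<Sum>j\<le>l. T j)"
    unfolding pseudo_spline_II_mask_def T_def key[OF xy assms(1)]
    by (simp add: x_def y_def power_mult atLeast0AtMost)
  have "1 = (x + y)^(N+l)" using xy by simp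
  also have "\<dots> = (\<Sum>j\<le>N+l. T j)" unfolding T_def binomial_ring by simp
  also have "\<dots> = (\<Sum>j\<le>l. T j) + (\<Sum>j=l+1..N+l. T j)"
  proof -
    have "{..N+l} = {..l} \<union> {l+1..N+l}" by auto
    then show ?thesis by (simp add: sum.union_disjoint)
  qed
  finally have one: "1 = pseudo_spline_II_mask N l \<xi> + (\<Sum>j=l+1..N+l. T j)" using m by simp
  have Tb: "T j \<le> real (N+l choose j) * x^(l+1)" if "j \<in> {l+1..N+l}" for j
  proof -
    have "x^j \<le> x^(l+1)" using that x0 x1 by (intro power_decreasing) auto
    moreover have "y^(N+l-j) \<le> 1" using y0 y1 by (simp add: power_le_one)
    ultimately have "x^j * y^(N+l-j) \<le> x^(l+1)"
      using x0 y0 by (metis mult_mono mult_cancel_left1 zero_le_power zero_le_one order_trans)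
    then show ?thesis unfolding T_def
      by (metis mult.assoc mult_left_mono of_nat_0_le_iff)
  qed
  have "(\<Sum>j=l+1..N+l. T j) \<le> (\<Sum>j=l+1..N+l. real (N+l choose j) * x^(l+1))"
    by (rule sum_mono) (use Tb in auto)
  also have "\<dots> = (\<Sum>j=l+1..N+l. real (N+l choose j)) * x^(l+1)"
    by (simp add: sum_distrib_right)
  also have "\<dots> \<le> (\<Sum>j=l+1..N+l. real (N+l choose j)) * (\<bar>\<xi>\<bar>^(2*l+2) / 2^(2*l+2))"
  proof (rule mult_left_mono)
    have "\<bar>sin (\<xi>/2)\<bar> \<le> \<bar>\<xi>/2\<bar>" by (rule abs_sin_x_le_abs_x)
    then have "x \<le> (\<xi>/2)^2" unfolding x_def
      by (metis abs_ge_zero power2_abs power_mono)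
    then have "x^(l+1) \<le> ((\<xi>/2)^2)^(l+1)" using x0 by (intro power_mono) auto
    also have "\<dots> = \<bar>\<xi>\<bar>^(2*l+2) / 2^(2*l+2)"
    proof -
      have e: "2*l+2 = 2*(l+1)" by simp
      show ?thesis unfolding e power_mult by (simp add: power_divide)
    qed
    finally show "x^(l+1) \<le> \<bar>\<xi>\<bar>^(2*l+2) / 2^(2*l+2)" .
  qed (simp add: sum_nonneg)
  finally have "(\<Sum>j=l+1..N+l. T j) \<le> ((\<Sum>j=l+1..N+l. real (N+l choose j)) / 2 ^ (2*l+2)) * \<bar>\<xi>\<bar> ^ (2*l+2)"
    by simp
  then show ?thesis using one by linarith
qed

end
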